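(* Let $P(z)=a_1z+a_2z^2+\cdots+a_nz^n$ be a polynomial of degree $n\ge 2$ with positive coefficients, so that $P(0)=0$, and suppose $P'(0)>1$. Then the Julia set $\mathcal{J}(P)$ is symmetric with respect to the real line, contains the point $0$, and does not intersect the positive real line $(0,\infty)$.
   Context: For a polynomial $P$ of degree at least two, the filled Julia set is $K(P)=\{z\in\mathbb{C}: (P^n(z))_{n>0}\text{ is bounded}\}$ and the Julia set $\mathcal{J}(P)$ is the boundary of $K(P)$. *)

theory Defs
  imports "HOL-Analysis.Analysis" "HOL-Computational_Algebra.Polynomial"
begin

text \<open>Filled Julia set: points with bounded forward orbit under P (n > 0;
  including n = 0 does not change boundedness).\<close>
definition filled_julia :: "complex poly \<Rightarrow> complex set" where
  "filled_julia P = {z. bounded ((\<lambda>n. (poly P ^^ n) z) ` {n. n > 0})}"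

definition julia :: "complex poly \<Rightarrow> complex set" where
  "julia P = frontier (filled_julia P)"

end

theory Submission
  imports Defs "HOL-Computational_Algebra.Fundamental_Theorem_Algebra"
begin

lemma escape_radius:
  fixes P :: "complex poly"
  assumes "degree P \<ge> 2" and "coeff P 0 = 0"
  shows "\<exists>r\<ge>1. \<forall>z. r \<le> norm z \<longrightarrow> 2 * norm z \<le> norm (poly P z)"
proof -
  obtain a Q where PQ: "P = pCons a Q" by (cases P) auto
  have a0: "a = 0" using assms(2) PQ by simp
  obtain b Q' where QQ: "Q = pCons b Q'" by (cases Q) auto
  have "Q' \<noteq> 0"
  proof
    assume "Q' = 0"
    then have "degree P \<le> 1" using PQ QQ by (simp add: degree_pCons_eq_if)
    then show False using assms(1) by simp
  qed
  from poly_infinity[OF this, of 2 b] obtain r where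
    r: "\<forall>z. r \<le> norm z \<longrightarrow> 2 \<le> norm (poly (pCons b Q') z)" by blast
  have "\<forall>z. max r 1 \<le> norm z \<longrightarrow> 2 * norm z \<le> norm (poly P z)"
  proof (intro allI impI)
    fix z :: complex assume "max r 1 \<le> norm z"
    then have "2 \<le> norm (poly Q z)" using r QQ by auto
    then have "norm z * 2 \<le> norm z * norm (poly Q z)" by (simp add: mult_left_mono)
    then show "2 * norm z \<le> norm (poly P z)" using PQ a0 by (simp add: norm_mult mult.commute)
  qed
  then show ?thesis by (intro exI[of _ "max r 1"]) auto
qed

lemma iter_cont: fixes P :: "complex poly" shows "continuous_on UNIV (poly P ^^ n)"
proof (induction n)
  case 0 then show ?case by (simp add: continuous_on_id)
next
  case (Suc n)
  have "continuous_on UNIV (\<lambda>x. poly P ((poly P ^^ n) x))"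
    by (intro continuous_intros Suc)
  then show ?case by simp
qed

lemma K_char:
  fixes P :: "complex poly"
  assumes r1: "r \<ge> 1" and r: "\<forall>z. r \<le> norm z \<longrightarrow> 2 * norm z \<le> norm (poly P z)"
  shows "filled_julia P = {z. \<forall>n. norm ((poly P ^^ n) z) \<le> r}"
proof -
  have grow: "2 ^ n * norm w \<le> norm ((poly P ^^ n) w)" if "r \<le> norm w" for w n
  proof (induction n)
    case 0 then show ?case by simp
  next
    case (Suc n)
    have "r \<le> 2 ^ n * norm w"
      using that r1 mult_right_mono[of 1 "2 ^ n" "norm w"] by simp
    then have "r \<le> norm ((poly P ^^ n) w)" using Suc by linarith
    then have "2 * norm ((poly P ^^ n) w) \<le> norm ((poly P ^^ Suc n) w)" using r by simp
    then show ?case using Suc by simp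
  qed
  show ?thesis
  proof (intro set_eqI iffI)
    fix z assume "z \<in> filled_julia P"
    then obtain B where B: "\<forall>n>0. norm ((poly P ^^ n) z) \<le> B"
      unfolding filled_julia_def bounded_iff by auto
    show "z \<in> {z. \<forall>n. norm ((poly P ^^ n) z) \<le> r}"
    proof (rule ccontr)
      assume "z \<notin> {z. \<forall>n. norm ((poly P ^^ n) z) \<le> r}"
      then obtain m where m: "norm ((poly P ^^ m) z) > r" by (auto simp: not_le)
      obtain k where k: "B / r < 2 ^ k" using real_arch_pow[of 2 "B / r"] by auto
      have "2 ^ Suc k * norm ((poly P ^^ m) z) \<le> norm ((poly P ^^ Suc k) ((poly P ^^ m) z))"
        by (rule grow) (use m in simp)
      also have "\<dots> = norm ((poly P ^^ (Suc k + m)) z)" by (simp add: funpow_add)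
      also have "\<dots> \<le> B" by (rule B[rule_format]) simp
      finally have "2 ^ Suc k * norm ((poly P ^^ m) z) \<le> B" .
      moreover have "2 ^ k * r \<le> 2 ^ Suc k * norm ((poly P ^^ m) z)"
      proof -
        have "2 ^ k * r \<le> 2 ^ k * norm ((poly P ^^ m) z)"
          by (intro mult_left_mono) (use m in auto)
        also have "\<dots> \<le> 2 ^ Suc k * norm ((poly P ^^ m) z)"
          by (intro mult_right_mono) auto
        finally show ?thesis .
      qed
      moreover have "B < 2 ^ k * r" using k r1 by (simp add: divide_less_eq)
      ultimately show False by linarith
    qed
  next
    fix z assume "z \<in> {z. \<forall>n. norm ((poly P ^^ n) z) \<le> r}"
    then show "z \<in> filled_julia P"
      unfolding filled_julia_def bounded_iff by auto
  qed
qed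

lemma cnj_poly:
  fixes P :: "complex poly"
  assumes "\<forall>k. coeff P k \<in> \<real>"
  shows "poly P (cnj z) = cnj (poly P z)"
proof -
  have "cnj (poly P z) = (\<Sum>i\<le>degree P. cnj (coeff P i) * cnj z ^ i)"
    by (simp add: poly_altdef cnj_sum)
  also have "\<dots> = (\<Sum>i\<le>degree P. coeff P i * cnj z ^ i)"
    using assms by (simp add: Reals_cnj_iff)
  finally show ?thesis by (simp add: poly_altdef)
qed

theorem lemma3p1:
  fixes P :: "complex poly"
  assumes "degree P \<ge> 2"
    and "coeff P 0 = 0"
    and "\<And>k. 1 \<le> k \<Longrightarrow> k \<le> degree P \<Longrightarrow> coeff P k \<in> \<real> \<and> Re (coeff P k) > 0"
    and "Re (poly (pderiv P) 0) > 1"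
  shows "(\<forall>z. z \<in> julia P \<longleftrightarrow> cnj z \<in> julia P)
         \<and> 0 \<in> julia P
         \<and> julia P \<inter> {complex_of_real x | x. x > 0} = {}"
proof -
  obtain r where r1: "r \<ge> 1" and r: "\<forall>z. r \<le> norm z \<longrightarrow> 2 * norm z \<le> norm (poly P z)"
    using escape_radius[OF assms(1,2)] by blast
  define K where "K = filled_julia P"
  have Kc: "K = {z. \<forall>n. norm ((poly P ^^ n) z) \<le> r}"
    unfolding K_def by (rule K_char[OF r1 r])
  have clK: "closed K" unfolding Kc Collect_all_eq
    by (intro closed_INT ballI closed_Collect_le continuous_on_norm iter_cont continuous_on_const)
  have J: "julia P = frontier K" unfolding julia_def K_def ..
  have realc: "\<forall>k. coeff P k \<in> \<real>"
  proof
    fix k show "coeff P k \<in> \<real>"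
      using assms(2) assms(3)[of k] coeff_eq_0[of P k]
      by (cases "k = 0"; cases "k \<le> degree P") auto
  qed
  have cnj_it: "(poly P ^^ n) (cnj z) = cnj ((poly P ^^ n) z)" for n z
    by (induction n) (simp_all add: cnj_poly[OF realc])
  have Kcnj: "cnj z \<in> K \<longleftrightarrow> z \<in> K" for z
    unfolding Kc by (simp add: cnj_it)
  have sym1: "cnj z \<in> frontier K" if "z \<in> frontier K" for z
  proof -
    have dc: "dist (cnj a) (cnj b) = dist a b" for a b :: complex
      by (metis complex_cnj_diff complex_mod_cnj dist_norm)
    show ?thesis unfolding frontier_straddle
    proof (intro allI impI conjI)
      fix e :: real assume e: "e > 0"
      from that e obtain x where "x \<in> K" "dist z x < e" unfolding frontier_straddle by blast
      then show "\<exists>x\<in>K. dist (cnj z) x < e" using Kcnj dc by (intro bexI[of _ "cnj x"]) auto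
      from that e obtain y where "y \<notin> K" "dist z y < e" unfolding frontier_straddle by blast
      then show "\<exists>x. x \<notin> K \<and> dist (cnj z) x < e" using Kcnj dc by (intro exI[of _ "cnj y"]) auto
    qed
  qed
  have part1: "\<forall>z. z \<in> julia P \<longleftrightarrow> cnj z \<in> julia P"
    unfolding J
  proof (intro allI iffI)
    fix z assume "z \<in> frontier K" then show "cnj z \<in> frontier K" by (rule sym1)
  next
    fix z assume "cnj z \<in> frontier K"
    then have "cnj (cnj z) \<in> frontier K" by (rule sym1)
    then show "z \<in> frontier K" by simp
  qed
  define a1 where "a1 = Re (coeff P 1)"
  have c1: "coeff P 1 = poly (pderiv P) 0" by (simp add: poly_0_coeff_0 coeff_pderiv)
  have a1g: "a1 > 1" using assms(4) c1 a1_def by simp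
  have deg1: "1 \<le> degree P" using assms(1) by simp
  have step: "\<exists>y. poly P (complex_of_real x) = complex_of_real y \<and> a1 * x \<le> y" if x: "x > 0" for x
  proof -
    have cr: "coeff P i = complex_of_real (Re (coeff P i))" for i
      using realc by (simp add: complex_is_Real_iff complex_eq_iff)
    have "poly P (complex_of_real x) = (\<Sum>i\<le>degree P. complex_of_real (Re (coeff P i)) * complex_of_real x ^ i)"
      by (subst cr[symmetric]) (simp add: poly_altdef)
    also have "\<dots> = complex_of_real (\<Sum>i\<le>degree P. Re (coeff P i) * x ^ i)" by simp
    finally have eq: "poly P (complex_of_real x) = complex_of_real (\<Sum>i\<le>degree P. Re (coeff P i) * x ^ i)" .
    have nn: "0 \<le> Re (coeff P i) * x ^ i" if "i \<in> {..degree P}" for i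
    proof (cases "i = 0")
      case True then show ?thesis using assms(2) by simp
    next
      case False then show ?thesis using assms(3)[of i] that x by simp
    qed
    have "Re (coeff P 1) * x ^ 1 \<le> (\<Sum>i\<le>degree P. Re (coeff P i) * x ^ i)"
      by (rule member_le_sum[where f="\<lambda>i. Re (coeff P i) * x ^ i"]) (use nn deg1 in auto)
    then have "a1 * x \<le> (\<Sum>i\<le>degree P. Re (coeff P i) * x ^ i)" by (simp add: a1_def)
    with eq show ?thesis by (intro exI[of _ "\<Sum>i\<le>degree P. Re (coeff P i) * x ^ i"] conjI)
  qed
  have iter: "\<exists>y. (poly P ^^ n) (complex_of_real x) = complex_of_real y \<and> a1 ^ n * x \<le> y" if x: "x > 0" for x n
  proof (induction n)
    case 0 then show ?case by simp
  next
    case (Suc n)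
    then obtain y where y: "(poly P ^^ n) (complex_of_real x) = complex_of_real y" "a1 ^ n * x \<le> y" by blast
    have "0 < a1 ^ n * x" using a1g x by simp
    then have yp: "y > 0" using y by linarith
    obtain y' where y': "poly P (complex_of_real y) = complex_of_real y'" "a1 * y \<le> y'" using step[OF yp] by blast
    have "a1 * (a1 ^ n * x) \<le> a1 * y" using y a1g by simp
    then show ?case using y y' by (intro exI[of _ y']) auto
  qed
  have notK: "complex_of_real x \<notin> K" if x: "x > 0" for x
  proof
    assume inK: "complex_of_real x \<in> K"
    obtain n where n: "r / x < a1 ^ n" using real_arch_pow[OF a1g] by blast
    obtain y where y: "(poly P ^^ n) (complex_of_real x) = complex_of_real y" "a1 ^ n * x \<le> y"
      using iter[OF x] by blast
    have "r < a1 ^ n * x" using n x by (simp add: divide_less_eq)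
    then have "r < norm ((poly P ^^ n) (complex_of_real x))" using y by auto
    then show False using inK Kc by (auto simp: not_le[symmetric])
  qed
  have z0: "(poly P ^^ n) 0 = 0" for n
    by (induction n) (simp_all add: poly_0_coeff_0 assms(2))
  have zK: "0 \<in> K" unfolding Kc using z0 r1 by simp
  have part2: "0 \<in> julia P"
    unfolding J frontier_straddle
  proof (intro allI impI conjI)
    fix e :: real assume e: "e > 0"
    show "\<exists>x\<in>K. dist 0 x < e" using zK e by (intro bexI[of _ 0]) auto
    show "\<exists>x. x \<notin> K \<and> dist 0 x < e"
      using notK[of "e/2"] e by (intro exI[of _ "complex_of_real (e/2)"]) (auto simp: dist_norm)
  qed
  have part3: "julia P \<inter> {complex_of_real x | x. x > 0} = {}"
  proof -
    have False if "w \<in> frontier K" "w \<in> {complex_of_real x | x. x > 0}" for w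
    proof -
      from that(2) obtain x where x: "x > 0" "w = complex_of_real x" by blast
      have "w \<in> K" using that(1) frontier_subset_closed[OF clK] by blast
      then show False using notK[OF x(1)] x(2) by simp
    qed
    then show ?thesis unfolding J by blast
  qed
  show ?thesis by (intro conjI part1 part2 part3)
qed

end
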